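(* Let $G$ be a finite simple graph. If $G$ is not a cover graph, then the direct product $G \times G$ is not a cover graph.
   Context: A graph is a cover graph if it is the underlying (undirected) graph of the Hasse diagram of some finite partially ordered set. The direct product $G \times H$ has vertex set $V(G)\times V(H)$, with $(g_i,h_s)$ adjacent to $(g_j,h_t)$ if and only if $g_ig_j \in E(G)$ and $h_sh_t \in E(H)$. *)

theory Defs
  imports Main
begin

definition simple_graph :: "'a set \<Rightarrow> ('a \<Rightarrow> 'a \<Rightarrow> bool) \<Rightarrow> bool" where
  "simple_graph V E \<longleftrightarrow>
     (\<forall>x y. E x y \<longrightarrow> x \<in> V \<and> y \<in> V) \<and>
     (\<forall>x y. E x y \<longrightarrow> E y x) \<and>
     (\<forall>x. \<not> E x x)"

definition strict_partial_order_on :: "'a set \<Rightarrow> ('a \<Rightarrow> 'a \<Rightarrow> bool) \<Rightarrow> bool" where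
  "strict_partial_order_on V lt \<longleftrightarrow>
     (\<forall>x\<in>V. \<not> lt x x) \<and>
     (\<forall>x\<in>V. \<forall>y\<in>V. \<forall>z\<in>V. lt x y \<longrightarrow> lt y z \<longrightarrow> lt x z)"

definition covers :: "'a set \<Rightarrow> ('a \<Rightarrow> 'a \<Rightarrow> bool) \<Rightarrow> 'a \<Rightarrow> 'a \<Rightarrow> bool" where
  "covers V lt x y \<longleftrightarrow> x \<in> V \<and> y \<in> V \<and> lt x y \<and> \<not> (\<exists>z\<in>V. lt x z \<and> lt z y)"

definition cover_graph :: "'a set \<Rightarrow> ('a \<Rightarrow> 'a \<Rightarrow> bool) \<Rightarrow> bool" where
  "cover_graph V E \<longleftrightarrow>
     (\<exists>lt. strict_partial_order_on V lt \<and>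
        (\<forall>x\<in>V. \<forall>y\<in>V. E x y \<longleftrightarrow> covers V lt x y \<or> covers V lt y x))"

definition direct_prod_edges ::
  "('a \<Rightarrow> 'a \<Rightarrow> bool) \<Rightarrow> ('b \<Rightarrow> 'b \<Rightarrow> bool) \<Rightarrow> ('a \<times> 'b) \<Rightarrow> ('a \<times> 'b) \<Rightarrow> bool" where
  "direct_prod_edges E F p q \<longleftrightarrow> E (fst p) (fst q) \<and> F (snd p) (snd q)"

end

theory Submission
  imports Defs
begin

theorem corollary5:
  fixes V :: "'a set" and E :: "'a \<Rightarrow> 'a \<Rightarrow> bool"
  assumes "finite V" and "simple_graph V E"
    and "\<not> cover_graph V E"
  shows "\<not> cover_graph (V \<times> V) (direct_prod_edges E E)"
proof
  assume "cover_graph (V \<times> V) (direct_prod_edges E E)"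
  then obtain lt where po: "strict_partial_order_on (V \<times> V) lt"
    and cov: "\<forall>x\<in>V \<times> V. \<forall>y\<in>V \<times> V. direct_prod_edges E E x y \<longleftrightarrow>
                 covers (V \<times> V) lt x y \<or> covers (V \<times> V) lt y x"
    unfolding cover_graph_def by blast
  have EV: "\<And>x y. E x y \<Longrightarrow> x \<in> V \<and> y \<in> V"
    using assms(2) unfolding simple_graph_def by blast
  have irr: "\<And>x. x \<in> V \<times> V \<Longrightarrow> \<not> lt x x" and
    tr: "\<And>x y z. x \<in> V \<times> V \<Longrightarrow> y \<in> V \<times> V \<Longrightarrow> z \<in> V \<times> V \<Longrightarrow> lt x y \<Longrightarrow> lt y z \<Longrightarrow> lt x z"
    using po unfolding strict_partial_order_on_def by blast+
  define R where "R u v \<longleftrightarrow> E u v \<and> lt (u,u) (v,v)" for u v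
  define lt' where "lt' = R\<^sup>+\<^sup>+"
  have key: "lt (u,u) (v,v) \<and> u \<in> V \<and> v \<in> V" if "R\<^sup>+\<^sup>+ u v" for u v
    using that
  proof (induction rule: tranclp_induct)
    case (base y) then show ?case using EV unfolding R_def by blast
  next
    case (step y z)
    then show ?case using EV tr[of "(u,u)" "(y,y)" "(z,z)"] unfolding R_def by blast
  qed
  have "cover_graph V E"
    unfolding cover_graph_def
  proof (intro exI conjI ballI)
    show "strict_partial_order_on V lt'"
      unfolding strict_partial_order_on_def lt'_def
      using key irr by (auto intro: tranclp_trans)
  next
    fix x y assume x: "x \<in> V" and y: "y \<in> V"
    have cv: "covers V lt' a b" if "covers (V \<times> V) lt (a,a) (b,b)" "E a b" for a b
    proof -
      have "R a b" using that unfolding R_def covers_def by blast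
      moreover have "\<not> (\<exists>z\<in>V. lt' a z \<and> lt' z b)"
        using that key unfolding covers_def lt'_def by blast
      ultimately show ?thesis using EV that(2) unfolding covers_def lt'_def by blast
    qed
    have bck: "E a b" if "covers V lt' a b" for a b
    proof -
      have "R\<^sup>+\<^sup>+ a b" using that unfolding covers_def lt'_def by blast
      then show ?thesis
      proof (cases rule: tranclp.cases)
        case r_into_trancl then show ?thesis unfolding R_def by blast
      next
        case (trancl_into_trancl z)
        then have "lt' a z" "lt' z b" "z \<in> V" using key unfolding lt'_def by auto
        then show ?thesis using that unfolding covers_def by blast
      qed
    qed
    have Es: "E a b \<Longrightarrow> E b a" for a b using assms(2) unfolding simple_graph_def by blast
    show "E x y \<longleftrightarrow> covers V lt' x y \<or> covers V lt' y x"
    proof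
      assume e: "E x y"
      then have "direct_prod_edges E E (x,x) (y,y)" unfolding direct_prod_edges_def by simp
      then have "covers (V \<times> V) lt (x,x) (y,y) \<or> covers (V \<times> V) lt (y,y) (x,x)"
        using cov x y by blast
      then show "covers V lt' x y \<or> covers V lt' y x" using cv e Es by blast
    next
      assume "covers V lt' x y \<or> covers V lt' y x"
      then show "E x y" using bck Es by blast
    qed
  qed
  then show False using assms(3) by blast
qed

end
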